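(* Let $\Omega\subset\mathbb{R}^3$ be a bounded convex domain and $D_1=\{(x,y,v)\in\Omega\times\Omega\times\mathbb{R}^3: |x-q_-(x,v)|\le|y-q_-(y,v)|\}$. For every non-negative measurable function $h=h(v,y,x,r)$, $$\int_{D_1}\int_{|x-q_-(x,v)|}^{|y-q_-(y,v)|}h(v,y,x,r)\,dr\,dx\,dy\,dv=\int_{\mathbb{R}^3}\int_\Omega\int_{\Omega_{v',y'}}\int_{|x'-q^1(x',v')|}^{\min\{|x'-q^2(x',v')|,\,|y'-q_+(y',v')|\}}h(v',y'+r'\hat{v'},x'+r'\hat{v'},r')\,dr'\,dx'\,dy'\,dv',$$ where $\hat{v'}=v'/|v'|$ and $\Omega_{v',y'}$ is the set of points $x'\notin\Omega$ for which there exist $0<t^1(x',v')<t^2(x',v')$ with $q^i(x',v'):=x'+t^i(x',v')\hat{v'}\in\partial\Omega$ ($i=1,2$) and $t^1(x',v')<|y'-q_+(y',v')|$.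
   Context: For $x\in\Omega$, $v\ne0$: $\tau_\mp(x,v)=\inf\{t>0: x\mp tv\notin\Omega\}$, $q_-(x,v)=x-\tau_-(x,v)v$, $q_+(x,v)=x+\tau_+(x,v)v$. *)

theory Defs
  imports "HOL-Analysis.Analysis"
begin

definition tau_minus :: "(real^3) set \<Rightarrow> real^3 \<Rightarrow> real^3 \<Rightarrow> real" where
  "tau_minus \<Omega> x v = Inf {t. 0 < t \<and> x - t *\<^sub>R v \<notin> \<Omega>}"

definition tau_plus :: "(real^3) set \<Rightarrow> real^3 \<Rightarrow> real^3 \<Rightarrow> real" where
  "tau_plus \<Omega> x v = Inf {t. 0 < t \<and> x + t *\<^sub>R v \<notin> \<Omega>}"

definition q_minus :: "(real^3) set \<Rightarrow> real^3 \<Rightarrow> real^3 \<Rightarrow> real^3" where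
  "q_minus \<Omega> x v = x - tau_minus \<Omega> x v *\<^sub>R v"

definition q_plus :: "(real^3) set \<Rightarrow> real^3 \<Rightarrow> real^3 \<Rightarrow> real^3" where
  "q_plus \<Omega> x v = x + tau_plus \<Omega> x v *\<^sub>R v"

definition vhat :: "real^3 \<Rightarrow> real^3" where
  "vhat v = (1 / norm v) *\<^sub>R v"

definition t1 :: "(real^3) set \<Rightarrow> real^3 \<Rightarrow> real^3 \<Rightarrow> real" where
  "t1 \<Omega> x v = Inf {t. 0 < t \<and> x + t *\<^sub>R vhat v \<in> frontier \<Omega>}"

definition t2 :: "(real^3) set \<Rightarrow> real^3 \<Rightarrow> real^3 \<Rightarrow> real" where
  "t2 \<Omega> x v = Sup {t. 0 < t \<and> x + t *\<^sub>R vhat v \<in> frontier \<Omega>}"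

definition q1 :: "(real^3) set \<Rightarrow> real^3 \<Rightarrow> real^3 \<Rightarrow> real^3" where
  "q1 \<Omega> x v = x + t1 \<Omega> x v *\<^sub>R vhat v"

definition q2 :: "(real^3) set \<Rightarrow> real^3 \<Rightarrow> real^3 \<Rightarrow> real^3" where
  "q2 \<Omega> x v = x + t2 \<Omega> x v *\<^sub>R vhat v"

definition Omega_vy :: "(real^3) set \<Rightarrow> real^3 \<Rightarrow> real^3 \<Rightarrow> (real^3) set" where
  "Omega_vy \<Omega> v y = {x. x \<notin> \<Omega> \<and> 0 < t1 \<Omega> x v \<and> t1 \<Omega> x v < t2 \<Omega> x v
       \<and> q1 \<Omega> x v \<in> frontier \<Omega> \<and> q2 \<Omega> x v \<in> frontier \<Omega>
       \<and> t1 \<Omega> x v < norm (y - q_plus \<Omega> y v)}"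

definition D1 :: "(real^3) set \<Rightarrow> ((real^3) \<times> (real^3) \<times> (real^3)) set" where
  "D1 \<Omega> = {(x, y, v). x \<in> \<Omega> \<and> y \<in> \<Omega> \<and>
       norm (x - q_minus \<Omega> x v) \<le> norm (y - q_minus \<Omega> y v)}"

end

theory Submission
  imports Defs
begin


lemma line_interval:
  fixes \<Omega> :: "'a::euclidean_space set"
  assumes op: "open \<Omega>" and cv: "convex \<Omega>" and bd: "bounded \<Omega>" and u: "u \<noteq> 0"
    and ex: "\<exists>t. p + t *\<^sub>R u \<in> \<Omega>"
  obtains \<alpha> \<beta> where "\<alpha> < \<beta>" "\<And>t. p + t *\<^sub>R u \<in> \<Omega> \<longleftrightarrow> \<alpha> < t \<and> t < \<beta>"
    "\<And>t. p + t *\<^sub>R u \<in> closure \<Omega> \<longleftrightarrow> \<alpha> \<le> t \<and> t \<le> \<beta>"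
proof -
  define L where "L = {t. p + t *\<^sub>R u \<in> \<Omega>}"
  have Lne: "L \<noteq> {}" using ex by (auto simp: L_def)
  obtain B where B: "B > 0" "\<And>x. x \<in> \<Omega> \<Longrightarrow> norm x \<le> B" using bd bounded_pos by metis
  have Lb: "\<bar>t\<bar> \<le> (norm p + B) / norm u" if "t \<in> L" for t
  proof -
    have "norm (t *\<^sub>R u) \<le> norm (p + t *\<^sub>R u) + norm p"
      using norm_triangle_ineq4[of "p + t *\<^sub>R u" p] by simp
    also have "\<dots> \<le> B + norm p" using B(2)[of "p + t *\<^sub>R u"] that by (auto simp: L_def)
    finally have "\<bar>t\<bar> * norm u \<le> norm p + B" by simp
    thus ?thesis using u by (simp add: field_simps)
  qed
  have bdb: "bdd_below L" "bdd_above L"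
  proof -
    show "bdd_below L" unfolding bdd_below_def
      using Lb by (intro exI[of _ "-((norm p + B) / norm u)"]) (force simp: abs_le_iff)
    show "bdd_above L" unfolding bdd_above_def
      using Lb by (intro exI[of _ "((norm p + B) / norm u)"]) (force simp: abs_le_iff)
  qed
  have Lopen: "open L"
  proof -
    have "L = (\<lambda>t. p + t *\<^sub>R u) -` \<Omega>" by (auto simp: L_def)
    moreover have "continuous_on UNIV (\<lambda>t. p + t *\<^sub>R u)" by (intro continuous_intros)
    ultimately show ?thesis using op by (simp add: open_vimage)
  qed
  have Lconv: "t \<in> L" if "s1 \<in> L" "s2 \<in> L" "s1 < t" "t < s2" for s1 s2 t
  proof -
    define \<theta> where "\<theta> = (t - s1) / (s2 - s1)"
    have th: "0 \<le> \<theta>" "\<theta> \<le> 1" using that by (auto simp: \<theta>_def field_simps)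
    have "(1 - \<theta>) *\<^sub>R (p + s1 *\<^sub>R u) + \<theta> *\<^sub>R (p + s2 *\<^sub>R u) \<in> \<Omega>"
      using that th cv by (intro convexD) (auto simp: L_def)
    moreover have "(1 - \<theta>) *\<^sub>R (p + s1 *\<^sub>R u) + \<theta> *\<^sub>R (p + s2 *\<^sub>R u) = p + ((1 - \<theta>) * s1 + \<theta> * s2) *\<^sub>R u"
      by (simp add: algebra_simps)
    moreover have "(1 - \<theta>) * s1 + \<theta> * s2 = s1 + \<theta> * (s2 - s1)" by (simp add: algebra_simps)
    moreover have "\<theta> * (s2 - s1) = t - s1" using that by (simp add: \<theta>_def)
    ultimately show ?thesis by (simp add: L_def)
  qed
  define \<alpha> where "\<alpha> = Inf L"
  define \<beta> where "\<beta> = Sup L"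
  have mem: "t \<in> L \<longleftrightarrow> \<alpha> < t \<and> t < \<beta>" for t
  proof
    assume t: "t \<in> L"
    then obtain e where e: "e > 0" "ball t e \<subseteq> L" using Lopen open_contains_ball by blast
    have "t + e/2 \<in> L" "t - e/2 \<in> L" using e by (auto simp: dist_real_def intro!: subsetD[OF e(2)])
    hence "t + e/2 \<le> \<beta>" "\<alpha> \<le> t - e/2" using bdb by (auto simp: \<alpha>_def \<beta>_def intro: cSup_upper cInf_lower)
    thus "\<alpha> < t \<and> t < \<beta>" using e by auto
  next
    assume "\<alpha> < t \<and> t < \<beta>"
    then obtain s1 s2 where "s1 \<in> L" "s1 < t" "s2 \<in> L" "t < s2"
      using Lne bdb by (auto simp: \<alpha>_def \<beta>_def cInf_less_iff less_cSup_iff)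
    thus "t \<in> L" using Lconv by blast
  qed
  have ab: "\<alpha> < \<beta>"
  proof -
    obtain t where "t \<in> L" using Lne by blast
    thus ?thesis using mem[of t] by linarith
  qed
  have cl: "p + t *\<^sub>R u \<in> closure \<Omega> \<longleftrightarrow> \<alpha> \<le> t \<and> t \<le> \<beta>" for t
  proof
    assume t: "\<alpha> \<le> t \<and> t \<le> \<beta>"
    have "(\<lambda>t. p + t *\<^sub>R u) ` {\<alpha><..<\<beta>} \<subseteq> closure \<Omega>"
    proof
      fix z assume "z \<in> (\<lambda>t. p + t *\<^sub>R u) ` {\<alpha><..<\<beta>}"
      then obtain s where "s \<in> {\<alpha><..<\<beta>}" "z = p + s *\<^sub>R u" by blast
      hence "z \<in> \<Omega>" using mem[of s] by (simp add: L_def)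
      thus "z \<in> closure \<Omega>" using closure_subset by blast
    qed
    hence "(\<lambda>t. p + t *\<^sub>R u) ` closure {\<alpha><..<\<beta>} \<subseteq> closure \<Omega>"
      by (intro image_closure_subset continuous_intros) auto
    thus "p + t *\<^sub>R u \<in> closure \<Omega>" using t ab by (auto simp: image_subset_iff)
  next
    assume pc: "p + t *\<^sub>R u \<in> closure \<Omega>"
    define m where "m = (\<alpha> + \<beta>) / 2"
    have mL: "p + m *\<^sub>R u \<in> interior \<Omega>" using mem[of m] ab op by (simp add: m_def L_def interior_open)
    have seg: "open_segment (p + m *\<^sub>R u) (p + t *\<^sub>R u) \<subseteq> \<Omega>"
      using in_interior_closure_convex_segment[OF cv mL pc] op by (simp add: interior_open)
    have between: "s \<in> L" if "m < s \<and> s < t \<or> t < s \<and> s < m" for s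
    proof -
      define \<theta> where "\<theta> = (s - m) / (t - m)"
      have th: "0 < \<theta>" "\<theta> < 1" using that by (auto simp: \<theta>_def field_simps)
      have ne: "p + m *\<^sub>R u \<noteq> p + t *\<^sub>R u" using that u by auto
      have "(1 - \<theta>) *\<^sub>R (p + m *\<^sub>R u) + \<theta> *\<^sub>R (p + t *\<^sub>R u) = p + ((1 - \<theta>) * m + \<theta> * t) *\<^sub>R u"
        by (simp add: algebra_simps)
      moreover have "(1 - \<theta>) * m + \<theta> * t = m + \<theta> * (t - m)" by (simp add: algebra_simps)
      moreover have "\<theta> * (t - m) = s - m" using that by (auto simp: \<theta>_def)
      ultimately have eq: "p + s *\<^sub>R u = (1 - \<theta>) *\<^sub>R (p + m *\<^sub>R u) + \<theta> *\<^sub>R (p + t *\<^sub>R u)"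
        by simp
      have "p + s *\<^sub>R u \<in> open_segment (p + m *\<^sub>R u) (p + t *\<^sub>R u)"
        unfolding in_segment(2) using th ne eq by blast
      thus ?thesis using seg by (auto simp: L_def)
    qed
    show "\<alpha> \<le> t \<and> t \<le> \<beta>"
    proof (rule ccontr)
      assume "\<not> (\<alpha> \<le> t \<and> t \<le> \<beta>)"
      hence "t < \<alpha> \<or> \<beta> < t" by auto
      thus False
      proof
        assume "t < \<alpha>"
        hence "(t + \<alpha>)/2 \<in> L" using between[of "(t + \<alpha>)/2"] ab by (auto simp: m_def)
        hence "\<alpha> < (t + \<alpha>)/2" using mem by blast
        thus False using \<open>t < \<alpha>\<close> by (simp add: field_simps)
      next
        assume "\<beta> < t"
        hence "(t + \<beta>)/2 \<in> L" using between[of "(t + \<beta>)/2"] ab by (auto simp: m_def)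
        hence "(t + \<beta>)/2 < \<beta>" using mem by blast
        thus False using \<open>\<beta> < t\<close> by (simp add: field_simps)
      qed
    qed
  qed
  show ?thesis
    by (rule that[OF ab]) (use mem cl in \<open>auto simp: L_def\<close>)
qed

lemma exit_time:
  fixes \<Omega> :: "'a::euclidean_space set"
  assumes op: "open \<Omega>" and cv: "convex \<Omega>" and bd: "bounded \<Omega>" and z: "z \<in> \<Omega>" and w: "w \<noteq> 0"
  shows "0 < Inf {t. 0 < t \<and> z + t *\<^sub>R w \<notin> \<Omega>}"
    "\<And>t. 0 < t \<Longrightarrow> z + t *\<^sub>R w \<in> \<Omega> \<longleftrightarrow> t < Inf {t. 0 < t \<and> z + t *\<^sub>R w \<notin> \<Omega>}"
    "z + Inf {t. 0 < t \<and> z + t *\<^sub>R w \<notin> \<Omega>} *\<^sub>R w \<in> frontier \<Omega>"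
proof -
  have "\<exists>t. z + t *\<^sub>R w \<in> \<Omega>" using z by (intro exI[of _ 0]) simp
  then obtain \<alpha> \<beta> where ab: "\<alpha> < \<beta>" and m: "\<And>t. z + t *\<^sub>R w \<in> \<Omega> \<longleftrightarrow> \<alpha> < t \<and> t < \<beta>"
    and c: "\<And>t. z + t *\<^sub>R w \<in> closure \<Omega> \<longleftrightarrow> \<alpha> \<le> t \<and> t \<le> \<beta>"
    using line_interval[OF op cv bd w] by metis
  have a0: "\<alpha> < 0" "0 < \<beta>" using m[of 0] z by auto
  have "{t. 0 < t \<and> z + t *\<^sub>R w \<notin> \<Omega>} = {\<beta>..}" using a0 by (auto simp: m)
  hence tau: "Inf {t. 0 < t \<and> z + t *\<^sub>R w \<notin> \<Omega>} = \<beta>" by simp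
  show "0 < Inf {t. 0 < t \<and> z + t *\<^sub>R w \<notin> \<Omega>}" using tau a0 by simp
  show "\<And>t. 0 < t \<Longrightarrow> z + t *\<^sub>R w \<in> \<Omega> \<longleftrightarrow> t < Inf {t. 0 < t \<and> z + t *\<^sub>R w \<notin> \<Omega>}"
    using tau a0 m by auto
  show "z + Inf {t. 0 < t \<and> z + t *\<^sub>R w \<notin> \<Omega>} *\<^sub>R w \<in> frontier \<Omega>"
  proof -
    have "z + \<beta> *\<^sub>R w \<in> closure \<Omega>" using c[of \<beta>] ab by simp
    moreover have "z + \<beta> *\<^sub>R w \<notin> \<Omega>" using m[of \<beta>] by simp
    ultimately show ?thesis unfolding tau frontier_def interior_open[OF op] by blast
  qed
qed

lemma norm_vhat: "v \<noteq> 0 \<Longrightarrow> norm (vhat v) = 1"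
  by (simp add: vhat_def)

lemma a_props:
  fixes \<Omega> :: "(real^3) set"
  assumes op: "open \<Omega>" and cv: "convex \<Omega>" and bd: "bounded \<Omega>" and z: "z \<in> \<Omega>" and v: "v \<noteq> 0"
  shows "0 < norm (z - q_minus \<Omega> z v)"
    "\<And>s. 0 < s \<Longrightarrow> z - s *\<^sub>R vhat v \<in> \<Omega> \<longleftrightarrow> s < norm (z - q_minus \<Omega> z v)"
    "z - norm (z - q_minus \<Omega> z v) *\<^sub>R vhat v \<in> frontier \<Omega>"
proof -
  have mv: "-v \<noteq> 0" using v by simp
  have eqs: "\<And>t. z - t *\<^sub>R v = z + t *\<^sub>R (-v)" by simp
  have T: "tau_minus \<Omega> z v = Inf {t. 0 < t \<and> z + t *\<^sub>R (-v) \<notin> \<Omega>}"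
    unfolding tau_minus_def eqs ..
  note E = exit_time[OF op cv bd z mv, folded T]
  have N: "norm (z - q_minus \<Omega> z v) = tau_minus \<Omega> z v * norm v"
    using E(1) by (simp add: q_minus_def)
  have nv: "norm v > 0" using v by simp
  show "0 < norm (z - q_minus \<Omega> z v)" using N E(1) nv by simp
  show "z - s *\<^sub>R vhat v \<in> \<Omega> \<longleftrightarrow> s < norm (z - q_minus \<Omega> z v)" if s: "0 < s" for s
  proof -
    have "z - s *\<^sub>R vhat v = z + (s / norm v) *\<^sub>R (-v)" by (simp add: vhat_def)
    moreover have "s / norm v < tau_minus \<Omega> z v \<longleftrightarrow> s < tau_minus \<Omega> z v * norm v"
      using nv by (simp add: divide_less_eq)
    ultimately show ?thesis using E(2)[of "s / norm v"] s nv N by simp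
  qed
  have "z - norm (z - q_minus \<Omega> z v) *\<^sub>R vhat v = z + tau_minus \<Omega> z v *\<^sub>R (-v)"
    using nv by (simp add: N vhat_def)
  thus "z - norm (z - q_minus \<Omega> z v) *\<^sub>R vhat v \<in> frontier \<Omega>" using E(3) by simp
qed

lemma b_props:
  fixes \<Omega> :: "(real^3) set"
  assumes op: "open \<Omega>" and cv: "convex \<Omega>" and bd: "bounded \<Omega>" and z: "z \<in> \<Omega>" and v: "v \<noteq> 0"
  shows "0 < norm (z - q_plus \<Omega> z v)"
    "\<And>s. 0 < s \<Longrightarrow> z + s *\<^sub>R vhat v \<in> \<Omega> \<longleftrightarrow> s < norm (z - q_plus \<Omega> z v)"
proof -
  have T: "tau_plus \<Omega> z v = Inf {t. 0 < t \<and> z + t *\<^sub>R v \<notin> \<Omega>}"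
    unfolding tau_plus_def ..
  note E = exit_time[OF op cv bd z v, folded T]
  have N: "norm (z - q_plus \<Omega> z v) = tau_plus \<Omega> z v * norm v"
    using E(1) by (simp add: q_plus_def)
  have nv: "norm v > 0" using v by simp
  show "0 < norm (z - q_plus \<Omega> z v)" using N E(1) nv by simp
  show "z + s *\<^sub>R vhat v \<in> \<Omega> \<longleftrightarrow> s < norm (z - q_plus \<Omega> z v)" if s: "0 < s" for s
  proof -
    have "z + s *\<^sub>R vhat v = z + (s / norm v) *\<^sub>R v" by (simp add: vhat_def)
    moreover have "s / norm v < tau_plus \<Omega> z v \<longleftrightarrow> s < tau_plus \<Omega> z v * norm v"
      using nv by (simp add: divide_less_eq)
    ultimately show ?thesis using E(2)[of "s / norm v"] s nv N by simp
  qed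
qed

lemma Inf_Sup_empty_real: "Inf ({}::real set) = - Sup {}"
  by (simp add: Inf_real_def)

lemma line_cases:
  fixes \<Omega> :: "(real^3) set"
  assumes op: "open \<Omega>" and cv: "convex \<Omega>" and bd: "bounded \<Omega>" and v: "v \<noteq> 0"
    and x1: "x' \<notin> \<Omega>" and x2: "x' \<notin> frontier \<Omega>"
    and x3: "x' \<notin> frontier {p. \<exists>s. p + s *\<^sub>R vhat v \<in> \<Omega>}"
  shows "(\<exists>\<alpha> \<beta>. 0 < \<alpha> \<and> \<alpha> < \<beta> \<and> (\<forall>t. x' + t *\<^sub>R vhat v \<in> \<Omega> \<longleftrightarrow> \<alpha> < t \<and> t < \<beta>)
          \<and> t1 \<Omega> x' v = \<alpha> \<and> t2 \<Omega> x' v = \<beta> \<and> q1 \<Omega> x' v \<in> frontier \<Omega> \<and> q2 \<Omega> x' v \<in> frontier \<Omega>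
          \<and> norm (x' - q1 \<Omega> x' v) = \<alpha> \<and> norm (x' - q2 \<Omega> x' v) = \<beta>)
      \<or> ((\<forall>t>0. x' + t *\<^sub>R vhat v \<notin> \<Omega>) \<and> (\<forall>y'. x' \<notin> Omega_vy \<Omega> v y'))"
proof -
  define u where "u = vhat v"
  have u: "u \<noteq> 0" "norm u = 1" using v norm_vhat[OF v] by (auto simp: u_def)
  have x'cl: "x' \<notin> closure \<Omega>"
    using x1 x2 unfolding frontier_def interior_open[OF op] by blast
  show ?thesis
  proof (cases "\<exists>t. x' + t *\<^sub>R u \<in> \<Omega>")
    case True
    then obtain \<alpha> \<beta> where ab: "\<alpha> < \<beta>" and m: "\<And>t. x' + t *\<^sub>R u \<in> \<Omega> \<longleftrightarrow> \<alpha> < t \<and> t < \<beta>"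
      and c: "\<And>t. x' + t *\<^sub>R u \<in> closure \<Omega> \<longleftrightarrow> \<alpha> \<le> t \<and> t \<le> \<beta>"
      using line_interval[OF op cv bd u(1)] by metis
    have fr: "x' + t *\<^sub>R u \<in> frontier \<Omega> \<longleftrightarrow> \<alpha> \<le> t \<and> t \<le> \<beta> \<and> \<not> (\<alpha> < t \<and> t < \<beta>)" for t
      unfolding frontier_def interior_open[OF op] using c[of t] m[of t] by blast
    have "\<not> (\<alpha> \<le> 0 \<and> 0 \<le> \<beta>)" using c[of 0] x'cl by auto
    hence "0 < \<alpha> \<or> \<beta> < 0" by auto
    thus ?thesis
    proof
      assume a0: "0 < \<alpha>"
      have S: "{t. 0 < t \<and> x' + t *\<^sub>R vhat v \<in> frontier \<Omega>} = {\<alpha>, \<beta>}"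
        using a0 ab unfolding u_def[symmetric] fr by auto
      have T1: "t1 \<Omega> x' v = \<alpha>" unfolding t1_def S using ab by (intro cInf_eq_minimum) auto
      have T2: "t2 \<Omega> x' v = \<beta>" unfolding t2_def S using ab by (intro cSup_eq_maximum) auto
      have "q1 \<Omega> x' v \<in> frontier \<Omega>" unfolding q1_def T1 u_def[symmetric] fr using ab by auto
      moreover have "q2 \<Omega> x' v \<in> frontier \<Omega>" unfolding q2_def T2 u_def[symmetric] fr using ab by auto
      moreover have "norm (x' - q1 \<Omega> x' v) = \<alpha>" unfolding q1_def T1 u_def[symmetric] using u a0 by simp
      moreover have "norm (x' - q2 \<Omega> x' v) = \<beta>" unfolding q2_def T2 u_def[symmetric] using u a0 ab by simp
      ultimately show ?thesis using a0 ab T1 T2 m unfolding u_def by blast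
    next
      assume b0: "\<beta> < 0"
      have S: "{t. 0 < t \<and> x' + t *\<^sub>R vhat v \<in> frontier \<Omega>} = {}"
        using b0 ab unfolding u_def[symmetric] fr by auto
      have "x' \<notin> Omega_vy \<Omega> v y'" for y'
      proof
        assume "x' \<in> Omega_vy \<Omega> v y'"
        hence "0 < t1 \<Omega> x' v" "t1 \<Omega> x' v < t2 \<Omega> x' v" by (auto simp: Omega_vy_def)
        thus False unfolding t1_def t2_def S Inf_Sup_empty_real by linarith
      qed
      thus ?thesis using m b0 unfolding u_def by auto
    qed
  next
    case False
    define C where "C = {p. \<exists>s. p + s *\<^sub>R vhat v \<in> \<Omega>}"
    have "x' \<notin> C" using False by (auto simp: C_def u_def)
    hence ncl: "x' \<notin> closure C" using x3 unfolding C_def[symmetric] frontier_def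
      using interior_subset by blast
    have "x' \<notin> Omega_vy \<Omega> v y'" for y'
    proof
      assume "x' \<in> Omega_vy \<Omega> v y'"
      hence "q1 \<Omega> x' v \<in> closure \<Omega>" by (auto simp: Omega_vy_def frontier_def)
      moreover have "(\<lambda>z. z - t1 \<Omega> x' v *\<^sub>R u) ` closure \<Omega> \<subseteq> closure C"
      proof (rule image_closure_subset)
        show "continuous_on (closure \<Omega>) (\<lambda>z. z - t1 \<Omega> x' v *\<^sub>R u)" by (intro continuous_intros)
        show "(\<lambda>z. z - t1 \<Omega> x' v *\<^sub>R u) ` \<Omega> \<subseteq> closure C"
          using closure_subset by (fastforce simp: C_def u_def intro!: exI[of _ "t1 \<Omega> x' v"])
      qed simp
      ultimately have "q1 \<Omega> x' v - t1 \<Omega> x' v *\<^sub>R u \<in> closure C" by blast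
      thus False using ncl by (simp add: q1_def u_def)
    qed
    thus ?thesis using False unfolding u_def by auto
  qed
qed



lemma convex_C:
  fixes \<Omega> :: "'a::euclidean_space set"
  assumes "convex \<Omega>" shows "convex {p. \<exists>s. p + s *\<^sub>R u \<in> \<Omega>}"
  unfolding convex_def
proof (safe)
  fix x y s1 s2 and t1 t2 :: real
  assume xy: "x + s1 *\<^sub>R u \<in> \<Omega>" "y + s2 *\<^sub>R u \<in> \<Omega>" and t: "0 \<le> t1" "0 \<le> t2" "t1 + t2 = 1"
  have "t1 *\<^sub>R (x + s1 *\<^sub>R u) + t2 *\<^sub>R (y + s2 *\<^sub>R u) \<in> \<Omega>"
    using assms xy t by (intro convexD) auto
  moreover have "t1 *\<^sub>R (x + s1 *\<^sub>R u) + t2 *\<^sub>R (y + s2 *\<^sub>R u) = t1 *\<^sub>R x + t2 *\<^sub>R y + (t1 * s1 + t2 * s2) *\<^sub>R u"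
    by (simp add: algebra_simps)
  ultimately show "\<exists>s. t1 *\<^sub>R x + t2 *\<^sub>R y + s *\<^sub>R u \<in> \<Omega>" by auto
qed

lemma null_frontier:
  fixes S :: "'a::euclidean_space set"
  assumes "convex S" shows "frontier S \<in> null_sets lborel"
proof -
  have "frontier S \<in> sets lborel" by (simp add: borel_closed frontier_closed)
  moreover have "frontier S \<in> null_sets lebesgue"
    using negligible_convex_frontier[OF assms] negligible_iff_null_sets by blast
  ultimately show ?thesis using null_sets_completion_iff by blast
qed

lemma a_meas:
  fixes \<Omega> :: "(real^3) set"
  assumes op: "open \<Omega>" and cv: "convex \<Omega>" and bd: "bounded \<Omega>" and v: "v \<noteq> 0"
  shows "(\<lambda>z. if z \<in> \<Omega> then norm (z - q_minus \<Omega> z v) else 0) \<in> borel_measurable borel"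
proof (subst borel_measurable_iff_greater, intro allI)
  fix s :: real
  show "{x \<in> space borel. s < (if x \<in> \<Omega> then norm (x - q_minus \<Omega> x v) else 0)} \<in> sets borel"
  proof (cases "s < 0")
    case True
    hence "{x \<in> space borel. s < (if x \<in> \<Omega> then norm (x - q_minus \<Omega> x v) else 0)} = UNIV"
      by auto (smt (verit) norm_ge_zero)
    thus ?thesis by simp
  next
    case False
    have key: "s < norm (z - q_minus \<Omega> z v) \<longleftrightarrow> z - s *\<^sub>R vhat v \<in> \<Omega>" if z: "z \<in> \<Omega>" for z
    proof (cases "s = 0")
      case True thus ?thesis using z a_props(1)[OF op cv bd z v] by simp
    next
      case False thus ?thesis using \<open>\<not> s < 0\<close> a_props(2)[OF op cv bd z v, of s] by simp
    qed
    have im: "z \<in> (\<lambda>w. s *\<^sub>R vhat v + w) ` \<Omega> \<longleftrightarrow> z - s *\<^sub>R vhat v \<in> \<Omega>" for z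
      by (auto simp: image_iff intro!: bexI[of _ "z - s *\<^sub>R vhat v"])
    have "{x \<in> space borel. s < (if x \<in> \<Omega> then norm (x - q_minus \<Omega> x v) else 0)}
        = \<Omega> \<inter> ((\<lambda>w. s *\<^sub>R vhat v + w) ` \<Omega>)"
    proof (rule set_eqI)
      fix z
      show "z \<in> {x \<in> space borel. s < (if x \<in> \<Omega> then norm (x - q_minus \<Omega> x v) else 0)} \<longleftrightarrow>
            z \<in> \<Omega> \<inter> ((\<lambda>w. s *\<^sub>R vhat v + w) ` \<Omega>)"
        using key[of z] im[of z] False by auto
    qed
    moreover have "open (\<Omega> \<inter> ((\<lambda>w. s *\<^sub>R vhat v + w) ` \<Omega>))"
      using op by (intro open_Int open_translation) auto
    ultimately show ?thesis by (simp add: borel_open)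
  qed
qed

lemma transl:
  fixes g :: "'a::euclidean_space \<Rightarrow> ennreal"
  assumes "g \<in> borel_measurable borel"
  shows "(\<integral>\<^sup>+x. g x \<partial>lborel) = (\<integral>\<^sup>+x. g (x + c) \<partial>lborel)"
proof -
  have "(\<integral>\<^sup>+x. g x \<partial>lborel) = (\<integral>\<^sup>+x. g x \<partial>distr lborel borel ((+) c))" by (simp add: lborel_distr_plus)
  also have "\<dots> = (\<integral>\<^sup>+x. g (c + x) \<partial>lborel)" using assms by (intro nn_integral_distr) auto
  finally show ?thesis by (simp add: add.commute)
qed

lemma fixed_v:
  fixes \<Omega> :: "(real^3) set"
    and h :: "(real^3) \<times> (real^3) \<times> (real^3) \<times> real \<Rightarrow> ennreal" and v :: "real^3"
  assumes op: "open \<Omega>" and cv: "convex \<Omega>" and bd: "bounded \<Omega>"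
    and hm: "h \<in> borel_measurable borel" and v: "v \<noteq> 0"
  shows "(\<integral>\<^sup>+ y. (\<integral>\<^sup>+ x. indicator (D1 \<Omega>) (x, y, v) *
            (\<integral>\<^sup>+ r. indicator {norm (x - q_minus \<Omega> x v) .. norm (y - q_minus \<Omega> y v)} r *
               h (v, y, x, r) \<partial>lborel) \<partial>lborel) \<partial>lborel)
       = (\<integral>\<^sup>+ y'. indicator \<Omega> y' * (\<integral>\<^sup>+ x'. indicator (Omega_vy \<Omega> v y') x' *
            (\<integral>\<^sup>+ r'. indicator {norm (x' - q1 \<Omega> x' v) ..
                        min (norm (x' - q2 \<Omega> x' v)) (norm (y' - q_plus \<Omega> y' v))} r' *
               h (v, y' + r' *\<^sub>R vhat v, x' + r' *\<^sub>R vhat v, r') \<partial>lborel)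
            \<partial>lborel) \<partial>lborel)" (is "?L = ?R")
proof -
  define a where "a z = norm (z - q_minus \<Omega> z v)" for z
  define b where "b z = norm (z - q_plus \<Omega> z v)" for z
  define a' where "a' z = (if z \<in> \<Omega> then a z else 0)" for z
  define G where "G y x r = (if x \<in> \<Omega> \<and> y \<in> \<Omega> \<and> a' x \<le> a' y \<and> a' x \<le> r \<and> r \<le> a' y
      then h (v, y, x, r) else 0)" for y x r
  have [measurable]: "h \<in> borel_measurable (borel \<Otimes>\<^sub>M (borel \<Otimes>\<^sub>M (borel \<Otimes>\<^sub>M borel)))"
    using hm by (simp add: borel_prod)
  have [measurable]: "a' \<in> borel_measurable borel"
    unfolding a'_def a_def by (rule a_meas[OF op cv bd v])
  have [measurable]: "\<Omega> \<in> sets borel" using op by (simp add: borel_open)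

  have m1: "(\<lambda>(x, r). G y x r) \<in> borel_measurable (lborel \<Otimes>\<^sub>M lborel)" for y
    unfolding G_def split_beta' by measurable
  have m2: "(\<lambda>(y, r). \<integral>\<^sup>+ x. G y x r \<partial>lborel) \<in> borel_measurable (lborel \<Otimes>\<^sub>M lborel)"
    unfolding G_def split_beta' by measurable
  have m3: "(\<lambda>x. G y x r) \<in> borel_measurable borel" for y r
    unfolding G_def by measurable
  have m4: "(\<lambda>y. \<integral>\<^sup>+ x. G y (x + c) r \<partial>lborel) \<in> borel_measurable borel" for c r
    unfolding G_def by measurable
  have m5: "(\<lambda>(y, r). \<integral>\<^sup>+ x. G (y + r *\<^sub>R vhat v) (x + r *\<^sub>R vhat v) r \<partial>lborel) \<in> borel_measurable (lborel \<Otimes>\<^sub>M lborel)"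
    unfolding G_def split_beta' by measurable
  have m6: "(\<lambda>(x, r). G (y + r *\<^sub>R vhat v) (x + r *\<^sub>R vhat v) r) \<in> borel_measurable (lborel \<Otimes>\<^sub>M lborel)" for y
    unfolding G_def split_beta' by measurable
  have pw1: "indicator (D1 \<Omega>) (x, y, v) *
            (\<integral>\<^sup>+ r. indicator {norm (x - q_minus \<Omega> x v) .. norm (y - q_minus \<Omega> y v)} r *
               h (v, y, x, r) \<partial>lborel) = (\<integral>\<^sup>+ r. G y x r \<partial>lborel)" for x y
  proof -
    have "indicator (D1 \<Omega>) (x, y, v) *
            (\<integral>\<^sup>+ r. indicator {norm (x - q_minus \<Omega> x v) .. norm (y - q_minus \<Omega> y v)} r *
               h (v, y, x, r) \<partial>lborel) = (\<integral>\<^sup>+ r. indicator (D1 \<Omega>) (x, y, v) *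
             (indicator {norm (x - q_minus \<Omega> x v) .. norm (y - q_minus \<Omega> y v)} r *
               h (v, y, x, r)) \<partial>lborel)"
      by (rule nn_integral_cmult[symmetric]) measurable
    also have "\<dots> = (\<integral>\<^sup>+ r. G y x r \<partial>lborel)"
      by (intro nn_integral_cong) (auto simp: G_def D1_def a'_def a_def indicator_def)
    finally show ?thesis .
  qed
  have "?L = (\<integral>\<^sup>+ y. (\<integral>\<^sup>+ x. (\<integral>\<^sup>+ r. G y x r \<partial>lborel) \<partial>lborel) \<partial>lborel)"
    by (simp only: pw1)
  also have "\<dots> = (\<integral>\<^sup>+ y. (\<integral>\<^sup>+ r. (\<integral>\<^sup>+ x. G y x r \<partial>lborel) \<partial>lborel) \<partial>lborel)"
    by (intro nn_integral_cong lborel_pair.Fubini'[symmetric] m1)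
  also have "\<dots> = (\<integral>\<^sup>+ r. (\<integral>\<^sup>+ y. (\<integral>\<^sup>+ x. G y x r \<partial>lborel) \<partial>lborel) \<partial>lborel)"
    using lborel_pair.Fubini'[OF m2] by simp
  also have "\<dots> = (\<integral>\<^sup>+ r. (\<integral>\<^sup>+ y. (\<integral>\<^sup>+ x. G (y + r *\<^sub>R vhat v) (x + r *\<^sub>R vhat v) r \<partial>lborel) \<partial>lborel) \<partial>lborel)"
  proof (rule nn_integral_cong)
    fix r
    have "(\<integral>\<^sup>+ y. (\<integral>\<^sup>+ x. G y x r \<partial>lborel) \<partial>lborel) = (\<integral>\<^sup>+ y. (\<integral>\<^sup>+ x. G y (x + r *\<^sub>R vhat v) r \<partial>lborel) \<partial>lborel)"
      by (intro nn_integral_cong transl m3)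
    also have "\<dots> = (\<integral>\<^sup>+ y. (\<integral>\<^sup>+ x. G (y + r *\<^sub>R vhat v) (x + r *\<^sub>R vhat v) r \<partial>lborel) \<partial>lborel)"
      using transl[OF m4[of "r *\<^sub>R vhat v" r], of "r *\<^sub>R vhat v"] by simp
    finally show "(\<integral>\<^sup>+ y. (\<integral>\<^sup>+ x. G y x r \<partial>lborel) \<partial>lborel) = (\<integral>\<^sup>+ y. (\<integral>\<^sup>+ x. G (y + r *\<^sub>R vhat v) (x + r *\<^sub>R vhat v) r \<partial>lborel) \<partial>lborel)" .
  qed
  also have "\<dots> = (\<integral>\<^sup>+ y. (\<integral>\<^sup>+ r. (\<integral>\<^sup>+ x. G (y + r *\<^sub>R vhat v) (x + r *\<^sub>R vhat v) r \<partial>lborel) \<partial>lborel) \<partial>lborel)"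
    using lborel_pair.Fubini'[OF m5] by simp
  also have "\<dots> = (\<integral>\<^sup>+ y. (\<integral>\<^sup>+ x. (\<integral>\<^sup>+ r. G (y + r *\<^sub>R vhat v) (x + r *\<^sub>R vhat v) r \<partial>lborel) \<partial>lborel) \<partial>lborel)"
    by (intro nn_integral_cong lborel_pair.Fubini' m6)
  also have "\<dots> = ?R"
  proof -
    have P1: "0 < r \<and> x' + r *\<^sub>R vhat v \<in> \<Omega> \<and> y' + r *\<^sub>R vhat v \<in> \<Omega> \<and> x' \<notin> \<Omega> \<and> y' \<in> closure \<Omega>"
      if ne: "G (y' + r *\<^sub>R vhat v) (x' + r *\<^sub>R vhat v) r \<noteq> 0" for y' x' r
    proof -
      have c: "x' + r *\<^sub>R vhat v \<in> \<Omega>" "y' + r *\<^sub>R vhat v \<in> \<Omega>"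
        "a (x' + r *\<^sub>R vhat v) \<le> r" "r \<le> a (y' + r *\<^sub>R vhat v)"
        using ne by (auto simp: G_def a'_def split: if_splits)
      note ax = a_props[OF op cv bd c(1) v, folded a_def]
      note ay = a_props[OF op cv bd c(2) v, folded a_def]
      have r0: "0 < r" using ax(1) c(3) by simp
      have x'n: "x' \<notin> \<Omega>" using ax(2)[OF r0] c(3) by simp
      have "y' \<in> closure \<Omega>"
      proof (cases "r < a (y' + r *\<^sub>R vhat v)")
        case True
        hence "y' \<in> \<Omega>" using ay(2)[OF r0] by simp
        thus ?thesis using closure_subset by blast
      next
        case False
        hence "r = a (y' + r *\<^sub>R vhat v)" using c(4) by simp
        hence "y' \<in> frontier \<Omega>" using ay(3) by simp
        thus ?thesis by (simp add: frontier_def)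
      qed
      thus ?thesis using r0 c x'n by blast
    qed
    have P2: "G (y' + r *\<^sub>R vhat v) (x' + r *\<^sub>R vhat v) r = h (v, y' + r *\<^sub>R vhat v, x' + r *\<^sub>R vhat v, r)"
      if r0: "0 < r" and c: "x' + r *\<^sub>R vhat v \<in> \<Omega>" "y' + r *\<^sub>R vhat v \<in> \<Omega>" "x' \<notin> \<Omega>" "y' \<in> \<Omega>"
      for y' x' r
    proof -
      note ax = a_props[OF op cv bd c(1) v, folded a_def]
      note ay = a_props[OF op cv bd c(2) v, folded a_def]
      have "a (x' + r *\<^sub>R vhat v) \<le> r" using ax(2)[OF r0] c(3) by (simp add: not_less[symmetric])
      moreover have "r < a (y' + r *\<^sub>R vhat v)" using ay(2)[OF r0] c(4) by simp
      ultimately show ?thesis using c by (simp add: G_def a'_def)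
    qed
    have Fnull: "frontier \<Omega> \<in> null_sets lborel" by (rule null_frontier[OF cv])
    have Cnull: "frontier {p. \<exists>s. p + s *\<^sub>R vhat v \<in> \<Omega>} \<in> null_sets lborel"
      by (rule null_frontier[OF convex_C[OF cv]])
    show ?thesis
    proof (rule nn_integral_cong_AE)
      have "AE y' in lborel. y' \<notin> frontier \<Omega>" by (rule AE_not_in[OF Fnull])
      thus "AE y' in lborel. (\<integral>\<^sup>+ x'. (\<integral>\<^sup>+ r. G (y' + r *\<^sub>R vhat v) (x' + r *\<^sub>R vhat v) r \<partial>lborel) \<partial>lborel) =
        indicator \<Omega> y' * (\<integral>\<^sup>+ x'. indicator (Omega_vy \<Omega> v y') x' *
            (\<integral>\<^sup>+ r'. indicator {norm (x' - q1 \<Omega> x' v) ..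
                        min (norm (x' - q2 \<Omega> x' v)) (norm (y' - q_plus \<Omega> y' v))} r' *
               h (v, y' + r' *\<^sub>R vhat v, x' + r' *\<^sub>R vhat v, r') \<partial>lborel) \<partial>lborel)"
      proof eventually_elim
        fix y' assume y'f: "y' \<notin> frontier \<Omega>"
        show "(\<integral>\<^sup>+ x'. (\<integral>\<^sup>+ r. G (y' + r *\<^sub>R vhat v) (x' + r *\<^sub>R vhat v) r \<partial>lborel) \<partial>lborel) =
        indicator \<Omega> y' * (\<integral>\<^sup>+ x'. indicator (Omega_vy \<Omega> v y') x' *
            (\<integral>\<^sup>+ r'. indicator {norm (x' - q1 \<Omega> x' v) ..
                        min (norm (x' - q2 \<Omega> x' v)) (norm (y' - q_plus \<Omega> y' v))} r' *
               h (v, y' + r' *\<^sub>R vhat v, x' + r' *\<^sub>R vhat v, r') \<partial>lborel) \<partial>lborel)"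
        proof (cases "y' \<in> \<Omega>")
          case False
          hence "y' \<notin> closure \<Omega>" using y'f by (auto simp: frontier_def interior_open[OF op])
          hence "G (y' + r *\<^sub>R vhat v) (x' + r *\<^sub>R vhat v) r = 0" for x' r using P1 by blast
          thus ?thesis using False by simp
        next
          case y'O: True
          note by' = b_props[OF op cv bd y'O v, folded b_def]
          have "(\<integral>\<^sup>+ x'. (\<integral>\<^sup>+ r. G (y' + r *\<^sub>R vhat v) (x' + r *\<^sub>R vhat v) r \<partial>lborel) \<partial>lborel) =
            (\<integral>\<^sup>+ x'. indicator (Omega_vy \<Omega> v y') x' *
            (\<integral>\<^sup>+ r'. indicator {norm (x' - q1 \<Omega> x' v) ..
                        min (norm (x' - q2 \<Omega> x' v)) (norm (y' - q_plus \<Omega> y' v))} r' *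
               h (v, y' + r' *\<^sub>R vhat v, x' + r' *\<^sub>R vhat v, r') \<partial>lborel) \<partial>lborel)"
          proof (rule nn_integral_cong_AE)
            have "AE x' in lborel. x' \<notin> frontier \<Omega> \<union> frontier {p. \<exists>s. p + s *\<^sub>R vhat v \<in> \<Omega>}"
              by (rule AE_not_in) (use Fnull Cnull in auto)
            thus "AE x' in lborel. (\<integral>\<^sup>+ r. G (y' + r *\<^sub>R vhat v) (x' + r *\<^sub>R vhat v) r \<partial>lborel) =
              indicator (Omega_vy \<Omega> v y') x' *
              (\<integral>\<^sup>+ r'. indicator {norm (x' - q1 \<Omega> x' v) ..
                        min (norm (x' - q2 \<Omega> x' v)) (norm (y' - q_plus \<Omega> y' v))} r' *
               h (v, y' + r' *\<^sub>R vhat v, x' + r' *\<^sub>R vhat v, r') \<partial>lborel)"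
            proof eventually_elim
              fix x' assume x'f: "x' \<notin> frontier \<Omega> \<union> frontier {p. \<exists>s. p + s *\<^sub>R vhat v \<in> \<Omega>}"
              show "(\<integral>\<^sup>+ r. G (y' + r *\<^sub>R vhat v) (x' + r *\<^sub>R vhat v) r \<partial>lborel) =
              indicator (Omega_vy \<Omega> v y') x' *
              (\<integral>\<^sup>+ r'. indicator {norm (x' - q1 \<Omega> x' v) ..
                        min (norm (x' - q2 \<Omega> x' v)) (norm (y' - q_plus \<Omega> y' v))} r' *
               h (v, y' + r' *\<^sub>R vhat v, x' + r' *\<^sub>R vhat v, r') \<partial>lborel)"
              proof (cases "x' \<in> \<Omega>")
                case True
                hence "G (y' + r *\<^sub>R vhat v) (x' + r *\<^sub>R vhat v) r = 0" for r using P1 by blast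
                moreover have "x' \<notin> Omega_vy \<Omega> v y'" using True by (simp add: Omega_vy_def)
                ultimately show ?thesis by simp
              next
                case x'n: False
                have x2: "x' \<notin> frontier \<Omega>" and x3: "x' \<notin> frontier {p. \<exists>s. p + s *\<^sub>R vhat v \<in> \<Omega>}"
                  using x'f by auto
                from line_cases[OF op cv bd v x'n x2 x3]
                show ?thesis
                proof (elim disjE exE conjE)
                  fix \<alpha> \<beta>
                  assume a0: "0 < \<alpha>" and ab: "\<alpha> < \<beta>"
                    and m: "\<forall>t. x' + t *\<^sub>R vhat v \<in> \<Omega> \<longleftrightarrow> \<alpha> < t \<and> t < \<beta>"
                    and T1: "t1 \<Omega> x' v = \<alpha>" and T2: "t2 \<Omega> x' v = \<beta>"
                    and Q1: "q1 \<Omega> x' v \<in> frontier \<Omega>" and Q2: "q2 \<Omega> x' v \<in> frontier \<Omega>"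
                    and N1: "norm (x' - q1 \<Omega> x' v) = \<alpha>" and N2: "norm (x' - q2 \<Omega> x' v) = \<beta>"
                  have Bq: "norm (y' - q_plus \<Omega> y' v) = b y'" by (simp add: b_def)
                  show ?thesis
                  proof (cases "\<alpha> < b y'")
                    case True
                    have "x' \<in> Omega_vy \<Omega> v y'"
                      using x'n a0 ab T1 T2 Q1 Q2 True by (simp add: Omega_vy_def b_def)
                    moreover have "(\<integral>\<^sup>+ r. G (y' + r *\<^sub>R vhat v) (x' + r *\<^sub>R vhat v) r \<partial>lborel) =
                      (\<integral>\<^sup>+ r'. indicator {\<alpha> .. min \<beta> (b y')} r' *
                        h (v, y' + r' *\<^sub>R vhat v, x' + r' *\<^sub>R vhat v, r') \<partial>lborel)"
                    proof (rule nn_integral_cong_AE)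
                      have "AE r in lborel. r \<notin> {\<alpha>, \<beta>, b y'}"
                        by (rule AE_not_in) (simp add: finite_imp_null_set_lborel)
                      thus "AE r in lborel. G (y' + r *\<^sub>R vhat v) (x' + r *\<^sub>R vhat v) r =
                        indicator {\<alpha> .. min \<beta> (b y')} r * h (v, y' + r *\<^sub>R vhat v, x' + r *\<^sub>R vhat v, r)"
                      proof eventually_elim
                        fix r assume rn: "r \<notin> {\<alpha>, \<beta>, b y'}"
                        show "G (y' + r *\<^sub>R vhat v) (x' + r *\<^sub>R vhat v) r =
                          indicator {\<alpha> .. min \<beta> (b y')} r * h (v, y' + r *\<^sub>R vhat v, x' + r *\<^sub>R vhat v, r)"
                        proof (cases "\<alpha> < r \<and> r < \<beta> \<and> r < b y'")
                          case True
                          hence r0: "0 < r" using a0 by simp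
                          have "x' + r *\<^sub>R vhat v \<in> \<Omega>" using m True by simp
                          moreover have "y' + r *\<^sub>R vhat v \<in> \<Omega>" using by'(2)[OF r0] True by simp
                          ultimately show ?thesis using P2[OF r0 _ _ x'n y'O] True by (simp add: indicator_def)
                        next
                          case False
                          have "G (y' + r *\<^sub>R vhat v) (x' + r *\<^sub>R vhat v) r = 0"
                          proof (rule ccontr)
                            assume "G (y' + r *\<^sub>R vhat v) (x' + r *\<^sub>R vhat v) r \<noteq> 0"
                            from P1[OF this] have "0 < r" "x' + r *\<^sub>R vhat v \<in> \<Omega>" "y' + r *\<^sub>R vhat v \<in> \<Omega>" by auto
                            thus False using m by'(2)[of r] False by auto
                          qed
                          moreover have "r \<notin> {\<alpha> .. min \<beta> (b y')}" using False rn by auto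
                          ultimately show ?thesis by simp
                        qed
                      qed
                    qed
                    ultimately show ?thesis using N1 N2 Bq by simp
                  next
                    case False
                    have "x' \<notin> Omega_vy \<Omega> v y'" using T1 False by (simp add: Omega_vy_def b_def)
                    moreover have "G (y' + r *\<^sub>R vhat v) (x' + r *\<^sub>R vhat v) r = 0" for r
                    proof (rule ccontr)
                      assume "G (y' + r *\<^sub>R vhat v) (x' + r *\<^sub>R vhat v) r \<noteq> 0"
                      from P1[OF this] have "0 < r" "x' + r *\<^sub>R vhat v \<in> \<Omega>" "y' + r *\<^sub>R vhat v \<in> \<Omega>" by auto
                      thus False using m by'(2)[of r] False by auto
                    qed
                    ultimately show ?thesis by simp
                  qed
                next
                  assume n1: "\<forall>t>0. x' + t *\<^sub>R vhat v \<notin> \<Omega>" and n2: "\<forall>y'. x' \<notin> Omega_vy \<Omega> v y'"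
                  have "G (y' + r *\<^sub>R vhat v) (x' + r *\<^sub>R vhat v) r = 0" for r
                    using P1[of y' r x'] n1 by blast
                  thus ?thesis using n2 by simp
                qed
              qed
            qed
          qed
          thus ?thesis using y'O by simp
        qed
      qed
    qed
  qed
  finally show ?thesis .
qed


theorem mainTheorem18:
  fixes \<Omega> :: "(real^3) set"
    and h :: "(real^3) \<times> (real^3) \<times> (real^3) \<times> real \<Rightarrow> ennreal"
  assumes "open \<Omega>" and "convex \<Omega>" and "connected \<Omega>" and "bounded \<Omega>" and "\<Omega> \<noteq> {}"
    and "h \<in> borel_measurable borel"
  shows "(\<integral>\<^sup>+ v. (\<integral>\<^sup>+ y. (\<integral>\<^sup>+ x. indicator (D1 \<Omega>) (x, y, v) *
            (\<integral>\<^sup>+ r. indicator {norm (x - q_minus \<Omega> x v) .. norm (y - q_minus \<Omega> y v)} r *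
               h (v, y, x, r) \<partial>lborel) \<partial>lborel) \<partial>lborel) \<partial>lborel)
       = (\<integral>\<^sup>+ v'. (\<integral>\<^sup>+ y'. indicator \<Omega> y' * (\<integral>\<^sup>+ x'. indicator (Omega_vy \<Omega> v' y') x' *
            (\<integral>\<^sup>+ r'. indicator {norm (x' - q1 \<Omega> x' v') ..
                        min (norm (x' - q2 \<Omega> x' v')) (norm (y' - q_plus \<Omega> y' v'))} r' *
               h (v', y' + r' *\<^sub>R vhat v', x' + r' *\<^sub>R vhat v', r') \<partial>lborel)
            \<partial>lborel) \<partial>lborel) \<partial>lborel)"
proof (rule nn_integral_cong_AE)
  show "AE v in lborel. (\<integral>\<^sup>+ y. (\<integral>\<^sup>+ x. indicator (D1 \<Omega>) (x, y, v) *
            (\<integral>\<^sup>+ r. indicator {norm (x - q_minus \<Omega> x v) .. norm (y - q_minus \<Omega> y v)} r *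
               h (v, y, x, r) \<partial>lborel) \<partial>lborel) \<partial>lborel)
       = (\<integral>\<^sup>+ y'. indicator \<Omega> y' * (\<integral>\<^sup>+ x'. indicator (Omega_vy \<Omega> v y') x' *
            (\<integral>\<^sup>+ r'. indicator {norm (x' - q1 \<Omega> x' v) ..
                        min (norm (x' - q2 \<Omega> x' v)) (norm (y' - q_plus \<Omega> y' v))} r' *
               h (v, y' + r' *\<^sub>R vhat v, x' + r' *\<^sub>R vhat v, r') \<partial>lborel)
            \<partial>lborel) \<partial>lborel)"
    using AE_lborel_singleton[of 0]
  proof eventually_elim
    fix v :: "real^3" assume "v \<noteq> 0"
    thus "(\<integral>\<^sup>+ y. (\<integral>\<^sup>+ x. indicator (D1 \<Omega>) (x, y, v) *
            (\<integral>\<^sup>+ r. indicator {norm (x - q_minus \<Omega> x v) .. norm (y - q_minus \<Omega> y v)} r *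
               h (v, y, x, r) \<partial>lborel) \<partial>lborel) \<partial>lborel)
       = (\<integral>\<^sup>+ y'. indicator \<Omega> y' * (\<integral>\<^sup>+ x'. indicator (Omega_vy \<Omega> v y') x' *
            (\<integral>\<^sup>+ r'. indicator {norm (x' - q1 \<Omega> x' v) ..
                        min (norm (x' - q2 \<Omega> x' v)) (norm (y' - q_plus \<Omega> y' v))} r' *
               h (v, y' + r' *\<^sub>R vhat v, x' + r' *\<^sub>R vhat v, r') \<partial>lborel)
            \<partial>lborel) \<partial>lborel)"
      by (rule fixed_v[OF assms(1,2,4,6)])
  qed
qed

end
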